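(* For a multiplicative Lie algebra $G$: (1) $(Z(G)\otimes G)(G\otimes Z(G))\subseteq Z(G\otimes G)$; (2) $(LZ(G)\otimes G)(G\otimes LZ(G))\subseteq LZ(G\otimes G)$; (3) $(\mathcal Z(G)\otimes G)(G\otimes\mathcal Z(G))\subseteq\mathcal Z(G\otimes G)$.
   Context: A multiplicative Lie algebra is a group $(G,\cdot)$ with a binary operation $\star$ such that for all $x,y,z\in G$: $x\star x=1$; $x\star(yz)=(x\star y)\,{}^y(x\star z)$; $(xy)\star z={}^x(y\star z)(x\star z)$; $((x\star y)\star{}^yz)((y\star z)\star{}^zx)((z\star x)\star{}^xy)=1$; ${}^z(x\star y)={}^zx\star{}^zy$, where ${}^xy=xyx^{-1}$. $Z(G)$ is the group center, $LZ(G)=\{x: x\star y=1\ \forall y\}$, $\mathcal Z(G)=LZ(G)\cap Z(G)$. The tensor square $G\otimes G$ is the multiplicative Lie algebra generated by symbols $x\otimes y$ ($x,y\in G$) subject to, for all $x,x',y,y'\in G$: $x\otimes(yy')=(x\otimes y)({}^yx\otimes{}^yy')$; $(xx')\otimes y=({}^xx'\otimes{}^xy)(x\otimes y)$; $((x\star x')\otimes{}^{x'}y)({}^yx\otimes(x'\star y))^{-1}({}^xx'\otimes(x\star y)^{-1})^{-1}=1$; $({}^{y'}x\otimes(y\star y'))((y\star x)^{-1}\otimes{}^yy')^{-1}((y'\star x)\otimes{}^xy)^{-1}=1$; and $(x\otimes y)\star(x'\otimes y')=(y\star x)^{-1}\otimes(x'\star y')$. For an ideal $A$ of $G$, $A\otimes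 G$ (resp. $G\otimes A$) is the subgroup of $G\otimes G$ generated by all $a\otimes b$ with $a\in A,b\in G$ (resp. $a\in G,b\in A$). *)

theory Defs
  imports "HOL-Algebra.Coset" "HOL-Algebra.Generated_Groups"
begin

definition conj :: "('a, 'b) monoid_scheme \<Rightarrow> 'a \<Rightarrow> 'a \<Rightarrow> 'a" where
  "conj G x y = x \<otimes>\<^bsub>G\<^esub> y \<otimes>\<^bsub>G\<^esub> inv\<^bsub>G\<^esub> x"

definition mult_lie_alg :: "('a, 'b) monoid_scheme \<Rightarrow> ('a \<Rightarrow> 'a \<Rightarrow> 'a) \<Rightarrow> bool" where
  "mult_lie_alg G st \<longleftrightarrow> group G \<and>
    (\<forall>x\<in>carrier G. \<forall>y\<in>carrier G. st x y \<in> carrier G) \<and>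
    (\<forall>x\<in>carrier G. st x x = \<one>\<^bsub>G\<^esub>) \<and>
    (\<forall>x\<in>carrier G. \<forall>y\<in>carrier G. \<forall>z\<in>carrier G.
        st x (y \<otimes>\<^bsub>G\<^esub> z) = st x y \<otimes>\<^bsub>G\<^esub> conj G y (st x z)) \<and>
    (\<forall>x\<in>carrier G. \<forall>y\<in>carrier G. \<forall>z\<in>carrier G.
        st (x \<otimes>\<^bsub>G\<^esub> y) z = conj G x (st y z) \<otimes>\<^bsub>G\<^esub> st x z) \<and>
    (\<forall>x\<in>carrier G. \<forall>y\<in>carrier G. \<forall>z\<in>carrier G.
        st (st x y) (conj G y z) \<otimes>\<^bsub>G\<^esub> st (st y z) (conj G z x) \<otimes>\<^bsub>G\<^esub>
        st (st z x) (conj G x y) = \<one>\<^bsub>G\<^esub>) \<and>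
    (\<forall>x\<in>carrier G. \<forall>y\<in>carrier G. \<forall>z\<in>carrier G.
        conj G z (st x y) = st (conj G z x) (conj G z y))"

definition grp_center :: "('a, 'b) monoid_scheme \<Rightarrow> 'a set" where
  "grp_center G = {x \<in> carrier G. \<forall>y\<in>carrier G. x \<otimes>\<^bsub>G\<^esub> y = y \<otimes>\<^bsub>G\<^esub> x}"

definition lie_center :: "('a, 'b) monoid_scheme \<Rightarrow> ('a \<Rightarrow> 'a \<Rightarrow> 'a) \<Rightarrow> 'a set" where
  "lie_center G st = {x \<in> carrier G. \<forall>y\<in>carrier G. st x y = \<one>\<^bsub>G\<^esub>}"

definition mla_center :: "('a, 'b) monoid_scheme \<Rightarrow> ('a \<Rightarrow> 'a \<Rightarrow> 'a) \<Rightarrow> 'a set" where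
  "mla_center G st = lie_center G st \<inter> grp_center G"

text \<open>Terms of the free multiplicative Lie algebra on symbols x \<otimes> y.\<close>
datatype 'a tm = Gen 'a 'a | Unit | Mul "'a tm" "'a tm" | Inv "'a tm" | Star "'a tm" "'a tm"

fun tgens :: "'a tm \<Rightarrow> ('a \<times> 'a) set" where
  "tgens (Gen x y) = {(x, y)}"
| "tgens Unit = {}"
| "tgens (Mul s t) = tgens s \<union> tgens t"
| "tgens (Inv t) = tgens t"
| "tgens (Star s t) = tgens s \<union> tgens t"

definition valid_tm :: "('a, 'b) monoid_scheme \<Rightarrow> 'a tm \<Rightarrow> bool" where
  "valid_tm G t \<longleftrightarrow> tgens t \<subseteq> carrier G \<times> carrier G"

definition tcj :: "'a tm \<Rightarrow> 'a tm \<Rightarrow> 'a tm" where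
  "tcj s t = Mul (Mul s t) (Inv s)"

inductive teq :: "('a, 'b) monoid_scheme \<Rightarrow> ('a \<Rightarrow> 'a \<Rightarrow> 'a) \<Rightarrow> 'a tm \<Rightarrow> 'a tm \<Rightarrow> bool"
  for G st where
  refl: "valid_tm G t \<Longrightarrow> teq G st t t"
| sym: "teq G st t u \<Longrightarrow> teq G st u t"
| trans: "teq G st t u \<Longrightarrow> teq G st u v \<Longrightarrow> teq G st t v"
| cong_mul: "teq G st t t' \<Longrightarrow> teq G st u u' \<Longrightarrow> teq G st (Mul t u) (Mul t' u')"
| cong_inv: "teq G st t t' \<Longrightarrow> teq G st (Inv t) (Inv t')"
| cong_star: "teq G st t t' \<Longrightarrow> teq G st u u' \<Longrightarrow> teq G st (Star t u) (Star t' u')"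
| assoc: "valid_tm G t \<Longrightarrow> valid_tm G u \<Longrightarrow> valid_tm G v \<Longrightarrow>
    teq G st (Mul (Mul t u) v) (Mul t (Mul u v))"
| lunit: "valid_tm G t \<Longrightarrow> teq G st (Mul Unit t) t"
| runit: "valid_tm G t \<Longrightarrow> teq G st (Mul t Unit) t"
| linv: "valid_tm G t \<Longrightarrow> teq G st (Mul (Inv t) t) Unit"
| rinv: "valid_tm G t \<Longrightarrow> teq G st (Mul t (Inv t)) Unit"
| star_self: "valid_tm G t \<Longrightarrow> teq G st (Star t t) Unit"
| star_mul_r: "valid_tm G t \<Longrightarrow> valid_tm G u \<Longrightarrow> valid_tm G v \<Longrightarrow>
    teq G st (Star t (Mul u v)) (Mul (Star t u) (tcj u (Star t v)))"
| star_mul_l: "valid_tm G t \<Longrightarrow> valid_tm G u \<Longrightarrow> valid_tm G v \<Longrightarrow>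
    teq G st (Star (Mul t u) v) (Mul (tcj t (Star u v)) (Star t v))"
| jacobi: "valid_tm G t \<Longrightarrow> valid_tm G u \<Longrightarrow> valid_tm G v \<Longrightarrow>
    teq G st (Mul (Mul (Star (Star t u) (tcj u v)) (Star (Star u v) (tcj v t)))
                  (Star (Star v t) (tcj t u))) Unit"
| star_conj: "valid_tm G t \<Longrightarrow> valid_tm G u \<Longrightarrow> valid_tm G v \<Longrightarrow>
    teq G st (tcj v (Star t u)) (Star (tcj v t) (tcj v u))"
| rel1: "x \<in> carrier G \<Longrightarrow> y \<in> carrier G \<Longrightarrow> y' \<in> carrier G \<Longrightarrow>
    teq G st (Gen x (y \<otimes>\<^bsub>G\<^esub> y')) (Mul (Gen x y) (Gen (conj G y x) (conj G y y')))"
| rel2: "x \<in> carrier G \<Longrightarrow> x' \<in> carrier G \<Longrightarrow> y \<in> carrier G \<Longrightarrow>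
    teq G st (Gen (x \<otimes>\<^bsub>G\<^esub> x') y) (Mul (Gen (conj G x x') (conj G x y)) (Gen x y))"
| rel3: "x \<in> carrier G \<Longrightarrow> x' \<in> carrier G \<Longrightarrow> y \<in> carrier G \<Longrightarrow>
    teq G st (Mul (Mul (Gen (st x x') (conj G x' y)) (Inv (Gen (conj G y x) (st x' y))))
                  (Inv (Gen (conj G x x') (inv\<^bsub>G\<^esub> (st x y))))) Unit"
| rel4: "x \<in> carrier G \<Longrightarrow> y \<in> carrier G \<Longrightarrow> y' \<in> carrier G \<Longrightarrow>
    teq G st (Mul (Mul (Gen (conj G y' x) (st y y')) (Inv (Gen (inv\<^bsub>G\<^esub> (st y x)) (conj G y y'))))
                  (Inv (Gen (st y' x) (conj G x y)))) Unit"
| rel5: "x \<in> carrier G \<Longrightarrow> y \<in> carrier G \<Longrightarrow> x' \<in> carrier G \<Longrightarrow> y' \<in> carrier G \<Longrightarrow>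
    teq G st (Star (Gen x y) (Gen x' y')) (Gen (inv\<^bsub>G\<^esub> (st y x)) (st x' y'))"

definition teq_rel :: "('a, 'b) monoid_scheme \<Rightarrow> ('a \<Rightarrow> 'a \<Rightarrow> 'a) \<Rightarrow> ('a tm \<times> 'a tm) set" where
  "teq_rel G st = {(t, u). teq G st t u}"

definition tensor_mult :: "('a, 'b) monoid_scheme \<Rightarrow> ('a \<Rightarrow> 'a \<Rightarrow> 'a) \<Rightarrow> 'a tm set \<Rightarrow> 'a tm set \<Rightarrow> 'a tm set" where
  "tensor_mult G st A B = (\<Union>a\<in>A. \<Union>b\<in>B. teq_rel G st `` {Mul a b})"

definition tensor_sq :: "('a, 'b) monoid_scheme \<Rightarrow> ('a \<Rightarrow> 'a \<Rightarrow> 'a) \<Rightarrow> 'a tm set monoid" where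
  "tensor_sq G st =
     \<lparr> carrier = {t. valid_tm G t} // teq_rel G st,
       mult = tensor_mult G st,
       one = teq_rel G st `` {Unit} \<rparr>"

definition tensor_star :: "('a, 'b) monoid_scheme \<Rightarrow> ('a \<Rightarrow> 'a \<Rightarrow> 'a) \<Rightarrow> 'a tm set \<Rightarrow> 'a tm set \<Rightarrow> 'a tm set" where
  "tensor_star G st A B = (\<Union>a\<in>A. \<Union>b\<in>B. teq_rel G st `` {Star a b})"

definition tens :: "('a, 'b) monoid_scheme \<Rightarrow> ('a \<Rightarrow> 'a \<Rightarrow> 'a) \<Rightarrow> 'a \<Rightarrow> 'a \<Rightarrow> 'a tm set" where
  "tens G st x y = teq_rel G st `` {Gen x y}"

definition tens_left :: "('a, 'b) monoid_scheme \<Rightarrow> ('a \<Rightarrow> 'a \<Rightarrow> 'a) \<Rightarrow> 'a set \<Rightarrow> 'a tm set set" where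
  "tens_left G st A = generate (tensor_sq G st) {tens G st a b | a b. a \<in> A \<and> b \<in> carrier G}"

definition tens_right :: "('a, 'b) monoid_scheme \<Rightarrow> ('a \<Rightarrow> 'a \<Rightarrow> 'a) \<Rightarrow> 'a set \<Rightarrow> 'a tm set set" where
  "tens_right G st A = generate (tensor_sq G st) {tens G st a b | a b. a \<in> carrier G \<and> b \<in> A}"

end

theory Submission
  imports Defs
begin

lemma (in group) gc1[simp]: "x \<in> carrier G \<Longrightarrow> y \<in> carrier G \<Longrightarrow> inv x \<otimes> (x \<otimes> y) = y"
  by (simp add: m_assoc[symmetric])
lemma (in group) gc2[simp]: "x \<in> carrier G \<Longrightarrow> y \<in> carrier G \<Longrightarrow> x \<otimes> (inv x \<otimes> y) = y"
  by (simp add: m_assoc[symmetric])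

lemma (in group) comm_inv: "a \<in> carrier G \<Longrightarrow> b \<in> carrier G \<Longrightarrow> a \<otimes> b = b \<otimes> a \<Longrightarrow> a \<otimes> inv b = inv b \<otimes> a"
proof -
  assume a: "a \<in> carrier G" and b: "b \<in> carrier G" and e: "a \<otimes> b = b \<otimes> a"
  have "inv b \<otimes> (a \<otimes> b) \<otimes> inv b = inv b \<otimes> (b \<otimes> a) \<otimes> inv b" by (simp add: e)
  then show ?thesis using a b by (simp add: m_assoc)
qed

lemma (in group) comm_mult: "a \<in> carrier G \<Longrightarrow> b \<in> carrier G \<Longrightarrow> c \<in> carrier G \<Longrightarrow>
  a \<otimes> b = b \<otimes> a \<Longrightarrow> a \<otimes> c = c \<otimes> a \<Longrightarrow> a \<otimes> (b \<otimes> c) = (b \<otimes> c) \<otimes> a"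
proof -
  assume a: "a \<in> carrier G" and b: "b \<in> carrier G" and c: "c \<in> carrier G"
    and ab: "a \<otimes> b = b \<otimes> a" and ac: "a \<otimes> c = c \<otimes> a"
  have "a \<otimes> (b \<otimes> c) = (a \<otimes> b) \<otimes> c" using a b c by (rule m_assoc[symmetric])
  also have "\<dots> = (b \<otimes> a) \<otimes> c" using ab by (rule arg_cong[where f="\<lambda>u. u \<otimes> c"])
  also have "\<dots> = b \<otimes> (a \<otimes> c)" using b a c by (rule m_assoc)
  also have "\<dots> = b \<otimes> (c \<otimes> a)" using ac by (rule arg_cong[where f="\<lambda>u. b \<otimes> u"])
  also have "\<dots> = (b \<otimes> c) \<otimes> a" using b c a by (rule m_assoc[symmetric])
  finally show ?thesis .
qed

lemma (in group) comm_mult_c: "b \<in> carrier G \<Longrightarrow> c \<in> carrier G \<Longrightarrow>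
  \<forall>y\<in>carrier G. b \<otimes> y = y \<otimes> b \<Longrightarrow> \<forall>y\<in>carrier G. c \<otimes> y = y \<otimes> c \<Longrightarrow>
  y \<in> carrier G \<Longrightarrow> (b \<otimes> c) \<otimes> y = y \<otimes> (b \<otimes> c)"
  by (rule comm_mult[symmetric]) (simp_all add: m_closed)

locale mla =
  fixes G :: "('a, 'b) monoid_scheme" (structure) and st :: "'a \<Rightarrow> 'a \<Rightarrow> 'a"
  assumes mla: "mult_lie_alg G st"

sublocale mla \<subseteq> group G
  using mla unfolding mult_lie_alg_def by blast

context mla
begin

lemma st_closed[simp]: "x \<in> carrier G \<Longrightarrow> y \<in> carrier G \<Longrightarrow> st x y \<in> carrier G"
  using mla unfolding mult_lie_alg_def by blast

lemma conj_closed[simp]: "x \<in> carrier G \<Longrightarrow> y \<in> carrier G \<Longrightarrow> conj G x y \<in> carrier G"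
  unfolding conj_def by simp

lemma valid_simps[simp]:
  "valid_tm G (Gen x y) \<longleftrightarrow> x \<in> carrier G \<and> y \<in> carrier G"
  "valid_tm G Unit"
  "valid_tm G (Mul s t) \<longleftrightarrow> valid_tm G s \<and> valid_tm G t"
  "valid_tm G (Inv t) \<longleftrightarrow> valid_tm G t"
  "valid_tm G (Star s t) \<longleftrightarrow> valid_tm G s \<and> valid_tm G t"
  "valid_tm G (tcj s t) \<longleftrightarrow> valid_tm G s \<and> valid_tm G t"
  by (auto simp: valid_tm_def tcj_def)

lemma teq_valid: "teq G st t u \<Longrightarrow> valid_tm G t \<and> valid_tm G u"
  by (induction rule: teq.induct) auto

abbreviation "R \<equiv> teq_rel G st"
abbreviation "T \<equiv> tensor_sq G st"
abbreviation "cls t \<equiv> R `` {t}"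

lemma R_iff: "(t, u) \<in> R \<longleftrightarrow> teq G st t u"
  by (simp add: teq_rel_def)

lemma equiv_R: "equiv {t. valid_tm G t} R"
  unfolding equiv_def refl_on_def sym_def trans_def
  using teq_valid by (auto simp: teq_rel_def intro: teq.intros)

lemma cls_eq_iff: "valid_tm G t \<Longrightarrow> valid_tm G u \<Longrightarrow> cls t = cls u \<longleftrightarrow> teq G st t u"
  using eq_equiv_class_iff[OF equiv_R] by (simp add: R_iff)

lemma cls_eqI: "teq G st t u \<Longrightarrow> cls t = cls u"
  using cls_eq_iff teq_valid by blast

lemma carrier_T: "carrier T = {t. valid_tm G t} // R"
  by (simp add: tensor_sq_def)

lemma cls_in[simp]: "valid_tm G t \<Longrightarrow> cls t \<in> carrier T"
  by (simp add: carrier_T quotientI)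

lemma carrier_TE: "X \<in> carrier T \<Longrightarrow> (\<And>t. valid_tm G t \<Longrightarrow> X = cls t \<Longrightarrow> P) \<Longrightarrow> P"
  by (auto simp: carrier_T elim!: quotientE)

lemma self_in_cls: "valid_tm G t \<Longrightarrow> t \<in> cls t"
  by (simp add: teq_rel_def teq.refl)

lemma mult_cls: "valid_tm G a \<Longrightarrow> valid_tm G b \<Longrightarrow> cls a \<otimes>\<^bsub>T\<^esub> cls b = cls (Mul a b)"
proof -
  assume a: "valid_tm G a" and b: "valid_tm G b"
  have "tensor_mult G st (cls a) (cls b) = cls (Mul a b)"
  proof
    show "tensor_mult G st (cls a) (cls b) \<subseteq> cls (Mul a b)"
      unfolding tensor_mult_def
    proof (clarsimp simp: R_iff)
      fix a' b' x assume "teq G st a a'" "teq G st b b'" "teq G st (Mul a' b') x"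
      then show "teq G st (Mul a b) x" by (meson teq.cong_mul teq.trans)
    qed
    show "cls (Mul a b) \<subseteq> tensor_mult G st (cls a) (cls b)"
      unfolding tensor_mult_def using self_in_cls a b by blast
  qed
  then show ?thesis by (simp add: tensor_sq_def)
qed

lemma star_cls: "valid_tm G a \<Longrightarrow> valid_tm G b \<Longrightarrow> tensor_star G st (cls a) (cls b) = cls (Star a b)"
proof -
  assume a: "valid_tm G a" and b: "valid_tm G b"
  show "tensor_star G st (cls a) (cls b) = cls (Star a b)"
  proof
    show "tensor_star G st (cls a) (cls b) \<subseteq> cls (Star a b)"
      unfolding tensor_star_def
    proof (clarsimp simp: R_iff)
      fix a' b' x assume "teq G st a a'" "teq G st b b'" "teq G st (Star a' b') x"
      then show "teq G st (Star a b) x" by (meson teq.cong_star teq.trans)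
    qed
    show "cls (Star a b) \<subseteq> tensor_star G st (cls a) (cls b)"
      unfolding tensor_star_def using self_in_cls a b by blast
  qed
qed

lemma one_T: "\<one>\<^bsub>T\<^esub> = cls Unit"
  by (simp add: tensor_sq_def)

lemma group_T: "group T"
proof (rule groupI)
  fix x y assume "x \<in> carrier T" "y \<in> carrier T"
  then show "x \<otimes>\<^bsub>T\<^esub> y \<in> carrier T"
    by (auto elim!: carrier_TE simp: mult_cls)
next
  show "\<one>\<^bsub>T\<^esub> \<in> carrier T" by (simp add: one_T)
next
  fix x y z assume "x \<in> carrier T" "y \<in> carrier T" "z \<in> carrier T"
  show "x \<otimes>\<^bsub>T\<^esub> y \<otimes>\<^bsub>T\<^esub> z = x \<otimes>\<^bsub>T\<^esub> (y \<otimes>\<^bsub>T\<^esub> z)" (is ?thesis')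
    using \<open>x \<in> carrier T\<close> \<open>y \<in> carrier T\<close> \<open>z \<in> carrier T\<close>
  proof (elim carrier_TE)
    fix a b c assume "valid_tm G a" "valid_tm G b" "valid_tm G c" "x = cls a" "y = cls b" "z = cls c"
    then show ?thesis' using teq.assoc[of G a b c st] by (simp add: mult_cls cls_eqI)
  qed
next
  fix x assume "x \<in> carrier T"
  then show "\<one>\<^bsub>T\<^esub> \<otimes>\<^bsub>T\<^esub> x = x"
  proof (elim carrier_TE)
    fix a assume "valid_tm G a" "x = cls a"
    then show ?thesis using teq.lunit[of G a st] by (simp add: mult_cls one_T cls_eqI)
  qed
next
  fix x assume "x \<in> carrier T"
  then show "\<exists>y\<in>carrier T. y \<otimes>\<^bsub>T\<^esub> x = \<one>\<^bsub>T\<^esub>"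
  proof (elim carrier_TE)
    fix a assume "valid_tm G a" "x = cls a"
    then show ?thesis using teq.linv[of G a st] by (intro bexI[of _ "cls (Inv a)"]) (simp_all add: mult_cls one_T cls_eqI)
  qed
qed

lemma inv_cls: "valid_tm G a \<Longrightarrow> inv\<^bsub>T\<^esub> (cls a) = cls (Inv a)"
  using teq.linv[of G a st] by (intro group.inv_equality[OF group_T]) (simp_all add: mult_cls one_T cls_eqI)

end
sublocale mla \<subseteq> T: group "tensor_sq G st"
  by (rule group_T)

context mla
begin

abbreviation "tstar \<equiv> tensor_star G st"
abbreviation "tn \<equiv> tens G st"

lemma tens_cls: "tn x y = cls (Gen x y)" by (simp add: tens_def)

lemma tens_closed[simp]: "x \<in> carrier G \<Longrightarrow> y \<in> carrier G \<Longrightarrow> tn x y \<in> carrier T"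
  by (simp add: tens_cls)

lemma tstar_closed[simp]: "X \<in> carrier T \<Longrightarrow> Y \<in> carrier T \<Longrightarrow> tstar X Y \<in> carrier T"
  by (auto elim!: carrier_TE simp: star_cls)

lemma tcj_cls: "valid_tm G s \<Longrightarrow> valid_tm G t \<Longrightarrow> cls (tcj s t) = cls s \<otimes>\<^bsub>T\<^esub> cls t \<otimes>\<^bsub>T\<^esub> inv\<^bsub>T\<^esub> cls s"
  by (simp add: tcj_def mult_cls inv_cls)

lemma star_mul_r_T:
  assumes "A \<in> carrier T" "B \<in> carrier T" "C \<in> carrier T"
  shows "tstar A (B \<otimes>\<^bsub>T\<^esub> C) = tstar A B \<otimes>\<^bsub>T\<^esub> (B \<otimes>\<^bsub>T\<^esub> tstar A C \<otimes>\<^bsub>T\<^esub> inv\<^bsub>T\<^esub> B)"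
  using assms
proof (elim carrier_TE)
  fix a b c assume v: "valid_tm G a" "valid_tm G b" "valid_tm G c" and e: "A = cls a" "B = cls b" "C = cls c"
  have "cls (Star a (Mul b c)) = cls (Mul (Star a b) (tcj b (Star a c)))"
    using teq.star_mul_r[OF v, of st] by (rule cls_eqI)
  then show ?thesis using v
    by (simp add: e mult_cls star_cls inv_cls tcj_def)
qed

lemma star_mul_l_T:
  assumes "A \<in> carrier T" "B \<in> carrier T" "C \<in> carrier T"
  shows "tstar (A \<otimes>\<^bsub>T\<^esub> B) C = (A \<otimes>\<^bsub>T\<^esub> tstar B C \<otimes>\<^bsub>T\<^esub> inv\<^bsub>T\<^esub> A) \<otimes>\<^bsub>T\<^esub> tstar A C"
  using assms
proof (elim carrier_TE)
  fix a b c assume v: "valid_tm G a" "valid_tm G b" "valid_tm G c" and e: "A = cls a" "B = cls b" "C = cls c"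
  have "cls (Star (Mul a b) c) = cls (Mul (tcj a (Star b c)) (Star a c))"
    using teq.star_mul_l[OF v, of st] by (rule cls_eqI)
  then show ?thesis using v
    by (simp add: e mult_cls star_cls inv_cls tcj_def)
qed

lemma rel1_T: "x \<in> carrier G \<Longrightarrow> y \<in> carrier G \<Longrightarrow> y' \<in> carrier G \<Longrightarrow>
   tn x (y \<otimes> y') = tn x y \<otimes>\<^bsub>T\<^esub> tn (conj G y x) (conj G y y')"
  using teq.rel1[of x G y y' st] by (simp add: tens_cls mult_cls cls_eqI)

lemma rel2_T: "x \<in> carrier G \<Longrightarrow> x' \<in> carrier G \<Longrightarrow> y \<in> carrier G \<Longrightarrow>
   tn (x \<otimes> x') y = tn (conj G x x') (conj G x y) \<otimes>\<^bsub>T\<^esub> tn x y"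
  using teq.rel2[of x G x' y st] by (simp add: tens_cls mult_cls cls_eqI)

lemma rel5_T: "x \<in> carrier G \<Longrightarrow> y \<in> carrier G \<Longrightarrow> x' \<in> carrier G \<Longrightarrow> y' \<in> carrier G \<Longrightarrow>
   tstar (tn x y) (tn x' y') = tn (inv (st y x)) (st x' y')"
  using teq.rel5[of x G y x' y' st] by (simp add: tens_cls star_cls cls_eqI)

lemma star_one_r: "A \<in> carrier T \<Longrightarrow> tstar A \<one>\<^bsub>T\<^esub> = \<one>\<^bsub>T\<^esub>"
  using star_mul_r_T[of A "\<one>\<^bsub>T\<^esub>" "\<one>\<^bsub>T\<^esub>"] by simp

lemma star_one_l: "C \<in> carrier T \<Longrightarrow> tstar \<one>\<^bsub>T\<^esub> C = \<one>\<^bsub>T\<^esub>"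
  using star_mul_l_T[of "\<one>\<^bsub>T\<^esub>" "\<one>\<^bsub>T\<^esub>" C] by simp

lemma star_inv_r:
  assumes A: "A \<in> carrier T" and B: "B \<in> carrier T"
  shows "tstar A (inv\<^bsub>T\<^esub> B) = inv\<^bsub>T\<^esub> B \<otimes>\<^bsub>T\<^esub> inv\<^bsub>T\<^esub> (tstar A B) \<otimes>\<^bsub>T\<^esub> B"
proof -
  define s where "s = tstar A B"
  define X where "X = tstar A (inv\<^bsub>T\<^esub> B)"
  have sc: "s \<in> carrier T" and Xc: "X \<in> carrier T" using A B by (simp_all add: s_def X_def)
  have "s \<otimes>\<^bsub>T\<^esub> (B \<otimes>\<^bsub>T\<^esub> X \<otimes>\<^bsub>T\<^esub> inv\<^bsub>T\<^esub> B) = \<one>\<^bsub>T\<^esub>"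
    using star_mul_r_T[of A B "inv\<^bsub>T\<^esub> B"] star_one_r[OF A] A B by (simp add: s_def X_def)
  then have 1: "B \<otimes>\<^bsub>T\<^esub> X \<otimes>\<^bsub>T\<^esub> inv\<^bsub>T\<^esub> B = inv\<^bsub>T\<^esub> s"
    using sc Xc B by (metis T.gc1 T.m_closed T.inv_closed T.r_one)
  have "X = inv\<^bsub>T\<^esub> B \<otimes>\<^bsub>T\<^esub> (B \<otimes>\<^bsub>T\<^esub> X \<otimes>\<^bsub>T\<^esub> inv\<^bsub>T\<^esub> B) \<otimes>\<^bsub>T\<^esub> B"
    using Xc B by (simp add: T.m_assoc)
  then show ?thesis using 1 by (simp add: X_def s_def)
qed

lemma star_inv_l:
  assumes A: "A \<in> carrier T" and C: "C \<in> carrier T"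
  shows "tstar (inv\<^bsub>T\<^esub> A) C = inv\<^bsub>T\<^esub> (inv\<^bsub>T\<^esub> A \<otimes>\<^bsub>T\<^esub> tstar A C \<otimes>\<^bsub>T\<^esub> A)"
proof -
  define Y where "Y = inv\<^bsub>T\<^esub> A \<otimes>\<^bsub>T\<^esub> tstar A C \<otimes>\<^bsub>T\<^esub> A"
  define X where "X = tstar (inv\<^bsub>T\<^esub> A) C"
  have Yc: "Y \<in> carrier T" and Xc: "X \<in> carrier T" using A C by (simp_all add: Y_def X_def)
  have "Y \<otimes>\<^bsub>T\<^esub> X = \<one>\<^bsub>T\<^esub>"
    using star_mul_l_T[of "inv\<^bsub>T\<^esub> A" A C] star_one_l[OF C] A C by (simp add: Y_def X_def)
  then have "X = inv\<^bsub>T\<^esub> Y"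
    using Yc Xc by (metis T.gc1 T.r_one T.inv_closed)
  then show ?thesis by (simp add: X_def Y_def)
qed


definition "gens = {tn a b | a b. a \<in> carrier G \<and> b \<in> carrier G}"
abbreviation "H \<equiv> generate T gens"

lemma gens_sub: "gens \<subseteq> carrier T" by (auto simp: gens_def)

lemma H_sub: "subgroup H T"
  by (rule T.generate_is_subgroup[OF gens_sub])

lemma H_carr: "x \<in> H \<Longrightarrow> x \<in> carrier T"
  using T.generate_in_carrier[OF gens_sub] by blast

lemma H_m: "x \<in> H \<Longrightarrow> y \<in> H \<Longrightarrow> x \<otimes>\<^bsub>T\<^esub> y \<in> H"
  using subgroup.m_closed[OF H_sub] by blast
lemma H_inv: "x \<in> H \<Longrightarrow> inv\<^bsub>T\<^esub> x \<in> H"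
  using subgroup.m_inv_closed[OF H_sub] by blast
lemma gens_H: "x \<in> gens \<Longrightarrow> x \<in> H"
  by (rule generate.incl)

lemma tn_H: "x \<in> carrier G \<Longrightarrow> y \<in> carrier G \<Longrightarrow> tn x y \<in> H"
  by (rule gens_H) (auto simp: gens_def)

lemma star_gens: assumes "g \<in> gens" "h \<in> gens" shows "tstar g h \<in> H"
proof -
  obtain a b where "g = tn a b" "a \<in> carrier G" "b \<in> carrier G" using assms(1) by (auto simp: gens_def)
  moreover obtain c d where "h = tn c d" "c \<in> carrier G" "d \<in> carrier G" using assms(2) by (auto simp: gens_def)
  ultimately show ?thesis by (simp add: rel5_T tn_H)
qed

lemma star_gen_H:
  assumes g: "g \<in> gens" and B: "B \<in> H"
  shows "tstar g B \<in> H"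
  using B
proof (induction rule: generate.induct)
  case one
  have "g \<in> carrier T" using g gens_sub by blast
  then show ?case using star_one_r[of g] generate.one[of T gens] by simp
next
  case (incl h)
  then show ?case using g star_gens by blast
next
  case (inv h)
  have "tstar g h \<in> H" using g inv star_gens by blast
  moreover have gc: "g \<in> carrier T" and hc: "h \<in> carrier T" using g inv gens_sub by auto
  moreover have "h \<in> H" using inv gens_H by auto
  ultimately show ?case unfolding star_inv_r[OF gc hc] by (intro H_inv H_m)
next
  case (eng h1 h2)
  then show ?case using g gens_sub star_mul_r_T[of g h1 h2] H_carr
    by (auto intro!: H_m H_inv)
qed

lemma star_H:
  assumes A: "A \<in> H" and B: "B \<in> H"
  shows "tstar A B \<in> H"
  using A
proof (induction rule: generate.induct)
  case one
  then show ?case using B H_carr star_one_l by (auto intro: generate.one)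
next
  case (incl h)
  then show ?case using B star_gen_H by blast
next
  case (inv h)
  have hc: "h \<in> carrier T" and Bc: "B \<in> carrier T" using inv B gens_sub H_carr by auto
  have "tstar h B \<in> H" "h \<in> H" using inv B star_gen_H gens_H by auto
  then show ?case unfolding star_inv_l[OF hc Bc] by (intro H_inv H_m)
next
  case (eng h1 h2)
  then show ?case using B star_mul_l_T[of h1 h2 B] H_carr
    by (auto intro!: H_m H_inv)
qed

lemma cls_H: "valid_tm G t \<Longrightarrow> cls t \<in> H"
proof (induction t)
  case (Gen x y)
  then have "tn x y \<in> gens" by (auto simp: gens_def)
  then show ?case using gens_H by (simp add: tens_cls)
next
  case Unit
  then show ?case using generate.one[of T gens] by (simp add: one_T)
next
  case (Mul s t)
  then show ?case by (auto simp: mult_cls[symmetric] intro!: H_m)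
next
  case (Inv t)
  then show ?case by (auto simp: inv_cls[symmetric] intro!: H_inv)
next
  case (Star s t)
  then show ?case by (auto simp: star_cls[symmetric] intro!: star_H)
qed

lemma carrier_eq_H: "carrier T = H"
  using H_carr cls_H by (auto elim!: carrier_TE)


lemma conj_mult: "x \<in> carrier G \<Longrightarrow> a \<in> carrier G \<Longrightarrow> b \<in> carrier G \<Longrightarrow>
  conj G x (a \<otimes> b) = conj G x a \<otimes> conj G x b"
  by (simp add: conj_def m_assoc)

lemma conj_conj: "x \<in> carrier G \<Longrightarrow> y \<in> carrier G \<Longrightarrow> a \<in> carrier G \<Longrightarrow>
  conj G (conj G y x) (conj G y a) = conj G (y \<otimes> x) a"
  by (simp add: conj_def m_assoc inv_mult_group)

lemma conj_inv_cancel: "x \<in> carrier G \<Longrightarrow> a \<in> carrier G \<Longrightarrow> conj G x (conj G (inv x) a) = a"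
  by (simp add: conj_def m_assoc)

lemma core:
  assumes x: "x \<in> carrier G" and y: "y \<in> carrier G" and a: "a \<in> carrier G" and b: "b \<in> carrier G"
  shows "tn x y \<otimes>\<^bsub>T\<^esub> tn (conj G (y \<otimes> x) a) (conj G (y \<otimes> x) b)
       = tn (conj G (x \<otimes> y) a) (conj G (x \<otimes> y) b) \<otimes>\<^bsub>T\<^esub> tn x y"
proof -
  define P where "P = tn (conj G x a) (conj G x y)"
  define Q where "Q = tn x y"
  define U where "U = tn (conj G (y \<otimes> x) a) (conj G (y \<otimes> x) b)"
  define V where "V = tn (conj G y x) (conj G y b)"
  define W where "W = tn (conj G (x \<otimes> y) a) (conj G (x \<otimes> y) b)"
  have cs: "P \<in> carrier T" "Q \<in> carrier T" "U \<in> carrier T" "V \<in> carrier T" "W \<in> carrier T"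
    using x y a b by (simp_all add: P_def Q_def U_def V_def W_def)
  have e1: "tn (x \<otimes> a) (y \<otimes> b) = P \<otimes>\<^bsub>T\<^esub> Q \<otimes>\<^bsub>T\<^esub> (U \<otimes>\<^bsub>T\<^esub> V)"
  proof -
    have "tn (x \<otimes> a) (y \<otimes> b) = tn (x \<otimes> a) y \<otimes>\<^bsub>T\<^esub> tn (conj G y (x \<otimes> a)) (conj G y b)"
      using x y a b by (simp add: rel1_T)
    also have "tn (x \<otimes> a) y = P \<otimes>\<^bsub>T\<^esub> Q"
      using x y a by (simp add: rel2_T P_def Q_def)
    also have "tn (conj G y (x \<otimes> a)) (conj G y b) = U \<otimes>\<^bsub>T\<^esub> V"
      using x y a b by (simp add: conj_mult rel2_T conj_conj U_def V_def)
    finally show ?thesis .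
  qed
  have e2: "tn (x \<otimes> a) (y \<otimes> b) = P \<otimes>\<^bsub>T\<^esub> W \<otimes>\<^bsub>T\<^esub> (Q \<otimes>\<^bsub>T\<^esub> V)"
  proof -
    have "tn (x \<otimes> a) (y \<otimes> b) = tn (conj G x a) (conj G x (y \<otimes> b)) \<otimes>\<^bsub>T\<^esub> tn x (y \<otimes> b)"
      using x y a b by (simp add: rel2_T)
    also have "tn (conj G x a) (conj G x (y \<otimes> b)) = P \<otimes>\<^bsub>T\<^esub> W"
      using x y a b by (simp add: conj_mult rel1_T conj_conj P_def W_def)
    also have "tn x (y \<otimes> b) = Q \<otimes>\<^bsub>T\<^esub> V"
      using x y b by (simp add: rel1_T Q_def V_def)
    finally show ?thesis .
  qed
  have "P \<otimes>\<^bsub>T\<^esub> ((Q \<otimes>\<^bsub>T\<^esub> U) \<otimes>\<^bsub>T\<^esub> V) = P \<otimes>\<^bsub>T\<^esub> ((W \<otimes>\<^bsub>T\<^esub> Q) \<otimes>\<^bsub>T\<^esub> V)"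
    using e1 e2 cs by (simp add: T.m_assoc)
  then have "Q \<otimes>\<^bsub>T\<^esub> U = W \<otimes>\<^bsub>T\<^esub> Q"
    using cs by simp
  then show ?thesis by (simp add: Q_def U_def W_def)
qed


end
context mla
begin
lemma comm_tn:
  assumes x: "x \<in> carrier G" and y: "y \<in> carrier G" and xy: "x \<otimes> y = y \<otimes> x"
    and a: "a \<in> carrier G" and b: "b \<in> carrier G"
  shows "tn x y \<otimes>\<^bsub>T\<^esub> tn a b = tn a b \<otimes>\<^bsub>T\<^esub> tn x y"
proof -
  define a' where "a' = conj G (inv (y \<otimes> x)) a"
  define b' where "b' = conj G (inv (y \<otimes> x)) b"
  have "a' \<in> carrier G" "b' \<in> carrier G" using x y a b by (simp_all add: a'_def b'_def)
  from core[OF x y this] show ?thesis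
    using x y a b by (simp add: xy a'_def b'_def conj_inv_cancel)
qed

lemma central_tn:
  assumes x: "x \<in> carrier G" and y: "y \<in> carrier G" and xy: "x \<otimes> y = y \<otimes> x"
    and B: "B \<in> carrier T"
  shows "tn x y \<otimes>\<^bsub>T\<^esub> B = B \<otimes>\<^bsub>T\<^esub> tn x y"
proof -
  have "B \<in> H" using B carrier_eq_H by simp
  then show ?thesis
  proof (induction rule: generate.induct)
    case one
    then show ?case using x y by simp
  next
    case (incl h)
    then show ?case using comm_tn[OF x y xy] by (auto simp: gens_def)
  next
    case (inv h)
    then have "h \<in> carrier T" using gens_sub by blast
    moreover have "tn x y \<otimes>\<^bsub>T\<^esub> h = h \<otimes>\<^bsub>T\<^esub> tn x y" using inv comm_tn[OF x y xy] by (auto simp: gens_def)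
    ultimately show ?case using x y by (simp add: T.comm_inv)
  next
    case (eng h1 h2)
    then have "h1 \<in> carrier T" "h2 \<in> carrier T" using H_carr by auto
    then show ?case using x y by (intro T.comm_mult eng.IH) simp_all
  qed
qed

lemma grp_center_sub: "subgroup (grp_center T) T"
proof (rule T.subgroupI)
  show "grp_center T \<subseteq> carrier T" by (auto simp: grp_center_def)
  show "grp_center T \<noteq> {}" using T.one_closed by (auto simp: grp_center_def)
next
  fix a assume "a \<in> grp_center T"
  then have a: "a \<in> carrier T" and ac: "\<forall>y\<in>carrier T. a \<otimes>\<^bsub>T\<^esub> y = y \<otimes>\<^bsub>T\<^esub> a"
    unfolding grp_center_def by blast+
  have "\<forall>y\<in>carrier T. inv\<^bsub>T\<^esub> a \<otimes>\<^bsub>T\<^esub> y = y \<otimes>\<^bsub>T\<^esub> inv\<^bsub>T\<^esub> a"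
  proof
    fix y assume y: "y \<in> carrier T"
    have "y \<otimes>\<^bsub>T\<^esub> a = a \<otimes>\<^bsub>T\<^esub> y" using ac y by simp
    then show "inv\<^bsub>T\<^esub> a \<otimes>\<^bsub>T\<^esub> y = y \<otimes>\<^bsub>T\<^esub> inv\<^bsub>T\<^esub> a"
      using T.comm_inv[OF y a] by simp
  qed
  then show "inv\<^bsub>T\<^esub> a \<in> grp_center T" using a unfolding grp_center_def by simp
next
  fix a b assume "a \<in> grp_center T" "b \<in> grp_center T"
  then have a: "a \<in> carrier T" and ac: "\<forall>y\<in>carrier T. a \<otimes>\<^bsub>T\<^esub> y = y \<otimes>\<^bsub>T\<^esub> a"
    and b: "b \<in> carrier T" and bc: "\<forall>y\<in>carrier T. b \<otimes>\<^bsub>T\<^esub> y = y \<otimes>\<^bsub>T\<^esub> b"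
    unfolding grp_center_def by blast+
  have "\<forall>y\<in>carrier T. (a \<otimes>\<^bsub>T\<^esub> b) \<otimes>\<^bsub>T\<^esub> y = y \<otimes>\<^bsub>T\<^esub> (a \<otimes>\<^bsub>T\<^esub> b)"
    using T.comm_mult_c[OF a b ac bc] by blast
  then show "a \<otimes>\<^bsub>T\<^esub> b \<in> grp_center T" using a b unfolding grp_center_def by simp
qed

lemma st_antisym: "x \<in> carrier G \<Longrightarrow> y \<in> carrier G \<Longrightarrow> st y x \<otimes> st x y = \<one>"
proof -
  assume x: "x \<in> carrier G" and y: "y \<in> carrier G"
  have self: "\<And>u. u \<in> carrier G \<Longrightarrow> st u u = \<one>" and
    mr: "\<And>u v w. u \<in> carrier G \<Longrightarrow> v \<in> carrier G \<Longrightarrow> w \<in> carrier G \<Longrightarrow>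
        st u (v \<otimes> w) = st u v \<otimes> conj G v (st u w)" and
    ml: "\<And>u v w. u \<in> carrier G \<Longrightarrow> v \<in> carrier G \<Longrightarrow> w \<in> carrier G \<Longrightarrow>
        st (u \<otimes> v) w = conj G u (st v w) \<otimes> st u w"
    using mla unfolding mult_lie_alg_def by blast+
  have "\<one> = st (x \<otimes> y) (x \<otimes> y)" using x y self by simp
  also have "\<dots> = conj G x (st y (x \<otimes> y)) \<otimes> st x (x \<otimes> y)" using x y ml by simp
  also have "st y (x \<otimes> y) = st y x" using x y mr[of y x y] self by (simp add: conj_def)
  also have "st x (x \<otimes> y) = conj G x (st x y)" using x y mr[of x x y] self by simp
  also have "conj G x (st y x) \<otimes> conj G x (st x y) = conj G x (st y x \<otimes> st x y)"
    using x y by (simp add: conj_mult)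
  finally have "conj G x (st y x \<otimes> st x y) = \<one>" by simp
  then have "inv x \<otimes> (conj G x (st y x \<otimes> st x y)) \<otimes> x = inv x \<otimes> \<one> \<otimes> x" by simp
  then show ?thesis using x y by (simp add: conj_def m_assoc)
qed

lemma tn_one: "c \<in> carrier G \<Longrightarrow> tn \<one> c = \<one>\<^bsub>T\<^esub>"
  using rel2_T[of \<one> \<one> c] by (simp add: conj_def)

lemma lie_gen:
  assumes g: "g \<in> carrier T" and gen: "\<And>a b. a \<in> carrier G \<Longrightarrow> b \<in> carrier G \<Longrightarrow> tstar g (tn a b) = \<one>\<^bsub>T\<^esub>"
    and B: "B \<in> carrier T"
  shows "tstar g B = \<one>\<^bsub>T\<^esub>"
proof -
  have "B \<in> H" using B carrier_eq_H by simp
  then show ?thesis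
  proof (induction rule: generate.induct)
    case one
    then show ?case using g star_one_r by simp
  next
    case (incl h)
    then show ?case using gen by (auto simp: gens_def)
  next
    case (inv h)
    then have "h \<in> carrier T" using gens_sub by blast
    moreover have "tstar g h = \<one>\<^bsub>T\<^esub>" using inv gen by (auto simp: gens_def)
    ultimately show ?case using g by (simp add: star_inv_r)
  next
    case (eng h1 h2)
    then have "h1 \<in> carrier T" "h2 \<in> carrier T" using H_carr by auto
    then show ?case using eng g by (simp add: star_mul_r_T)
  qed
qed

lemma lie_center_sub: "subgroup (lie_center T tstar) T"
proof (rule T.subgroupI)
  show "lie_center T tstar \<subseteq> carrier T" by (auto simp: lie_center_def)
  show "lie_center T tstar \<noteq> {}" using T.one_closed star_one_l by (auto simp: lie_center_def)
next
  fix a assume "a \<in> lie_center T tstar"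
  then show "inv\<^bsub>T\<^esub> a \<in> lie_center T tstar"
    by (auto simp: lie_center_def star_inv_l)
next
  fix a b assume "a \<in> lie_center T tstar" "b \<in> lie_center T tstar"
  then show "a \<otimes>\<^bsub>T\<^esub> b \<in> lie_center T tstar"
    by (auto simp: lie_center_def star_mul_l_T)
qed

lemma set_mult_sub: "subgroup K T \<Longrightarrow> A \<subseteq> K \<Longrightarrow> B \<subseteq> K \<Longrightarrow> A <#>\<^bsub>T\<^esub> B \<subseteq> K"
  unfolding set_mult_def by (auto intro: subgroup.m_closed)

lemma part1:
  "tens_left G st (grp_center G) <#>\<^bsub>T\<^esub> tens_right G st (grp_center G) \<subseteq> grp_center T"
proof (rule set_mult_sub[OF grp_center_sub])
  show "tens_left G st (grp_center G) \<subseteq> grp_center T"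
    unfolding tens_left_def
  proof (rule T.generate_subgroup_incl[OF _ grp_center_sub])
    show "{tn a b |a b. a \<in> grp_center G \<and> b \<in> carrier G} \<subseteq> grp_center T"
    proof clarify
      fix a b assume a: "a \<in> grp_center G" and b: "b \<in> carrier G"
      then have ac: "a \<in> carrier G" and ab: "a \<otimes> b = b \<otimes> a" unfolding grp_center_def by auto
      show "tn a b \<in> grp_center T"
        unfolding grp_center_def[of T] using central_tn[OF ac b ab] ac b by simp
    qed
  qed
  show "tens_right G st (grp_center G) \<subseteq> grp_center T"
    unfolding tens_right_def
  proof (rule T.generate_subgroup_incl[OF _ grp_center_sub])
    show "{tn a b |a b. a \<in> carrier G \<and> b \<in> grp_center G} \<subseteq> grp_center T"
    proof clarify
      fix a b assume a: "a \<in> carrier G" and b: "b \<in> grp_center G"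
      then have bc: "b \<in> carrier G" and ab: "a \<otimes> b = b \<otimes> a" unfolding grp_center_def by auto
      show "tn a b \<in> grp_center T"
        unfolding grp_center_def[of T] using central_tn[OF a bc ab] a bc by simp
    qed
  qed
qed

lemma part2:
  "tens_left G st (lie_center G st) <#>\<^bsub>T\<^esub> tens_right G st (lie_center G st) \<subseteq> lie_center T tstar"
proof (rule set_mult_sub[OF lie_center_sub])
  show "tens_left G st (lie_center G st) \<subseteq> lie_center T tstar"
    unfolding tens_left_def
  proof (rule T.generate_subgroup_incl[OF _ lie_center_sub])
    show "{tn a b |a b. a \<in> lie_center G st \<and> b \<in> carrier G} \<subseteq> lie_center T tstar"
    proof (clarify)
      fix z y assume z: "z \<in> lie_center G st" and y: "y \<in> carrier G"
      have zc: "z \<in> carrier G" and zl: "\<And>w. w \<in> carrier G \<Longrightarrow> st z w = \<one>" using z by (auto simp: lie_center_def)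
      have "st y z = \<one>" using st_antisym[OF zc y] zl[OF y] y zc by simp
      have "tstar (tn z y) B = \<one>\<^bsub>T\<^esub>" if "B \<in> carrier T" for B
        by (rule lie_gen) (use zc y that \<open>st y z = \<one>\<close> in \<open>simp_all add: rel5_T tn_one\<close>)
      then show "tn z y \<in> lie_center T tstar"
        unfolding lie_center_def using zc y by simp
    qed
  qed
  show "tens_right G st (lie_center G st) \<subseteq> lie_center T tstar"
    unfolding tens_right_def
  proof (rule T.generate_subgroup_incl[OF _ lie_center_sub])
    show "{tn a b |a b. a \<in> carrier G \<and> b \<in> lie_center G st} \<subseteq> lie_center T tstar"
    proof (clarify)
      fix z y assume z: "z \<in> lie_center G st" and y: "y \<in> carrier G"
      have zc: "z \<in> carrier G" and zl: "\<And>w. w \<in> carrier G \<Longrightarrow> st z w = \<one>" using z by (auto simp: lie_center_def)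
      have "tstar (tn y z) B = \<one>\<^bsub>T\<^esub>" if "B \<in> carrier T" for B
        by (rule lie_gen) (use zc zl y that in \<open>simp_all add: rel5_T tn_one\<close>)
      then show "tn y z \<in> lie_center T tstar"
        unfolding lie_center_def using zc y by simp
    qed
  qed
qed

end

theorem lemma3p3:
  fixes G :: "('a, 'b) monoid_scheme" and st :: "'a \<Rightarrow> 'a \<Rightarrow> 'a"
  assumes "mult_lie_alg G st"
  shows "(tens_left G st (grp_center G) <#>\<^bsub>tensor_sq G st\<^esub> tens_right G st (grp_center G)
           \<subseteq> grp_center (tensor_sq G st)) \<and>
         (tens_left G st (lie_center G st) <#>\<^bsub>tensor_sq G st\<^esub> tens_right G st (lie_center G st)
           \<subseteq> lie_center (tensor_sq G st) (tensor_star G st)) \<and>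
         (tens_left G st (mla_center G st) <#>\<^bsub>tensor_sq G st\<^esub> tens_right G st (mla_center G st)
           \<subseteq> mla_center (tensor_sq G st) (tensor_star G st))"
proof -
  interpret mla G st using assms by (rule mla.intro)
  have ml: "tens_left G st (mla_center G st) \<subseteq> tens_left G st (grp_center G) \<inter> tens_left G st (lie_center G st)"
    unfolding tens_left_def mla_center_def
    by (intro Int_greatest T.mono_generate) auto
  have mr: "tens_right G st (mla_center G st) \<subseteq> tens_right G st (grp_center G) \<inter> tens_right G st (lie_center G st)"
    unfolding tens_right_def mla_center_def
    by (intro Int_greatest T.mono_generate) auto
  have "tens_left G st (mla_center G st) <#>\<^bsub>T\<^esub> tens_right G st (mla_center G st) \<subseteq>
        (tens_left G st (grp_center G) <#>\<^bsub>T\<^esub> tens_right G st (grp_center G)) \<inter>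
        (tens_left G st (lie_center G st) <#>\<^bsub>T\<^esub> tens_right G st (lie_center G st))"
    using ml mr unfolding set_mult_def by blast
  then have p3: "tens_left G st (mla_center G st) <#>\<^bsub>T\<^esub> tens_right G st (mla_center G st) \<subseteq>
      mla_center T tstar"
    using part1 part2 unfolding mla_center_def by blast
  show ?thesis using part1 part2 p3 by blast
qed

end
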